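(* Assume (A1)–(A6) and that the numerical integrator $\Psi$ has order $p\ge1$ in $X$ for the problems $v'(s)=f(t_n+s,v(s))$ and $z'(s)=f(t_n+\frac k2+s,z(s))$. Let $\overline w_n$ be the generalized solution of $\overline w_n'=A\overline w_n$, $\overline w_n(0)=\Psi_{k/2}^{f,t_n}(u(t_n))$, $\partial\overline w_n(s)=\partial\big(u(t_n)+\frac k2 f(t_n,u(t_n))+sAu(t_n)\big)$, and let $\overline u_{n+1}=\Psi_{k/2}^{f,t_n+k/2}(\overline w_n(k))$ (one step of the modified exponential Strang method started from the exact value). Then the local error satisfies $$\rho_{n+1}:=\overline u_{n+1}-u(t_{n+1})=O(k^2).$$
   Context: Let $X,Y$ be Banach spaces, $T>0$, $A:D(A)\subset X\to X$ and $\partial:D(A)\to Y$ linear operators, $f:[0,T]\times X\to X$, $g:[0,T]\to Y$, and let $u$ be the solution of $u'(t)=Au(t)+f(t,u(t))$, $u(0)=u_0$, $\partial u(t)=g(t)$, $0\le t\le T$. Standing hypotheses: (A1) $\partial$ is onto. (A2) $\ker\partial$ is dense in $X$ and the restriction $A_0$ of $A$ to $D(A_0)=\ker\partial$ generates a $C_0$-semigroup $(e^{tA_0})_{t\ge0}$ on $X$ of negative type $\omega$. (A3) For every $z\in\mathbb C$ with $\Re z>\omega$ and $v\in Y$, the problem $Ax=zx$, $\partial x=v$ has a unique solution $x=:K(z)v\in D(A)$, and $\|K(z)v\|\le C\|v\|$ with $C$ uniform for $\Re z\ge\omega_0>\omega$. (A4) $f\in C^1([0,T]\times X,X)$. (A5)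 $u\in C^2([0,T],X)$, $u(t)\in D(A^2)$ for all $t$, and $Au,A^2u\in C^1([0,T],X)$. (A6) $f(t,u(t))\in D(A)$ for all $t$ and $Af(\cdot,u(\cdot))\in C([0,T],X)$. Generalized solution: for $u_0\in X$, $v_0,v_1\in Y$, the generalized solution of $w'(s)=Aw(s)$, $w(0)=u_0$, $\partial w(s)=v_0+v_1s$ is $w(s)=e^{sA_0}(u_0-K(0)v_0)+K(0)(v_0+v_1s)-\int_0^s e^{\sigma A_0}K(0)v_1\,d\sigma$. Time step $k>0$, $t_n=nk$. For $\tau\in[0,T]$, $\Psi_k^{f,\tau}(v_0)$ denotes one step of size $k$ of a numerical integrator applied to $v'(s)=f(\tau+s,v(s))$, $v(0)=v_0$; order $p$ means $\Psi_k^{f,\tau}(v_0)-v(k)=O(k^{p+1})$ uniformly for the arguments considered. Notation $a=O(b)$ means $\|a\|\le Cb$ with $C$ independent of $k$ (small enough) and of $n$ with $0\le nk\le T$. *)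

theory Defs
  imports "HOL-Analysis.Analysis"
begin

definition linear_on :: "'a::real_vector set \<Rightarrow> ('a \<Rightarrow> 'b::real_vector) \<Rightarrow> bool" where
  "linear_on D L \<longleftrightarrow> subspace D \<and>
     (\<forall>x\<in>D. \<forall>y\<in>D. L (x + y) = L x + L y) \<and> (\<forall>c. \<forall>x\<in>D. L (c *\<^sub>R x) = c *\<^sub>R L x)"

definition C0_semigroup :: "(real \<Rightarrow> 'a::real_normed_vector \<Rightarrow> 'a) \<Rightarrow> bool" where
  "C0_semigroup S \<longleftrightarrow> S 0 = id \<and> (\<forall>t\<ge>0. bounded_linear (S t)) \<and>
     (\<forall>t s. t \<ge> 0 \<longrightarrow> s \<ge> 0 \<longrightarrow> S (t + s) = S t \<circ> S s) \<and>
     (\<forall>x. ((\<lambda>t. S t x) \<longlongrightarrow> x) (at_right 0))"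

definition generates :: "'a::real_normed_vector set \<Rightarrow> ('a \<Rightarrow> 'a) \<Rightarrow> (real \<Rightarrow> 'a \<Rightarrow> 'a) \<Rightarrow> bool" where
  "generates D B S \<longleftrightarrow> C0_semigroup S \<and>
     D = {x. \<exists>y. ((\<lambda>h. (1 / h) *\<^sub>R (S h x - x)) \<longlongrightarrow> y) (at_right 0)} \<and>
     (\<forall>x\<in>D. ((\<lambda>h. (1 / h) *\<^sub>R (S h x - x)) \<longlongrightarrow> B x) (at_right 0))"

definition negative_type :: "(real \<Rightarrow> 'a::real_normed_vector \<Rightarrow> 'a) \<Rightarrow> real \<Rightarrow> bool" where
  "negative_type S \<omega> \<longleftrightarrow> \<omega> < 0 \<and> (\<exists>M. \<forall>t\<ge>0. onorm (S t) \<le> M * exp (\<omega> * t))"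

definition C1_on :: "real set \<Rightarrow> (real \<Rightarrow> 'a::real_normed_vector) \<Rightarrow> bool" where
  "C1_on S g \<longleftrightarrow> (\<exists>g'. (\<forall>t\<in>S. (g has_vector_derivative g' t) (at t within S)) \<and> continuous_on S g')"

text \<open>Generalized solution of w' = A w, w(0) = u0, \<partial> w(s) = v0 + v1 s.\<close>
definition gen_sol :: "(real \<Rightarrow> 'a::banach \<Rightarrow> 'a) \<Rightarrow> (real \<Rightarrow> 'b \<Rightarrow> 'a) \<Rightarrow> 'a \<Rightarrow> 'b \<Rightarrow> 'b::real_vector \<Rightarrow> real \<Rightarrow> 'a" where
  "gen_sol S K u0 v0 v1 s = S s (u0 - K 0 v0) + K 0 (v0 + s *\<^sub>R v1)
      - integral {0..s} (\<lambda>\<sigma>. S \<sigma> (K 0 v1))"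

definition order_step :: "(real \<Rightarrow> 'a::real_normed_vector \<Rightarrow> 'a) \<Rightarrow> (real \<Rightarrow> real \<Rightarrow> 'a \<Rightarrow> 'a)
     \<Rightarrow> nat \<Rightarrow> real \<Rightarrow> real \<Rightarrow> real \<Rightarrow> 'a \<Rightarrow> bool" where
  "order_step f Psi p C h \<tau> v0 \<longleftrightarrow> (\<exists>v. v 0 = v0 \<and>
     (\<forall>s\<in>{0..h}. (v has_vector_derivative f (\<tau> + s) (v s)) (at s within {0..h})) \<and>
     norm (Psi h \<tau> v0 - v h) \<le> C * h ^ (p + 1))"

end

theory Submission
  imports Defs
begin

lemma sg_basic:
  assumes "C0_semigroup S"
  shows "S 0 = id" "\<And>t. t \<ge> 0 \<Longrightarrow> bounded_linear (S t)"
    "\<And>t s x. t \<ge> 0 \<Longrightarrow> s \<ge> 0 \<Longrightarrow> S (t + s) x = S t (S s x)"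
    "\<And>x. ((\<lambda>t. S t x) \<longlongrightarrow> x) (at_right 0)"
  using assms unfolding C0_semigroup_def by auto

lemma sg_bound:
  assumes "C0_semigroup S" "\<forall>t\<ge>0. onorm (S t) \<le> M" "t \<ge> 0"
  shows "norm (S t x) \<le> M * norm x"
proof -
  have "norm (S t x) \<le> onorm (S t) * norm x"
    using onorm sg_basic(2)[OF assms(1) assms(3)] by blast
  also have "\<dots> \<le> M * norm x" using assms by (intro mult_right_mono) auto
  finally show ?thesis .
qed

lemma sg_small:
  assumes "C0_semigroup S" "e > 0"
  shows "\<exists>d>0. \<forall>h. 0 \<le> h \<and> h < d \<longrightarrow> norm (S h w - w) < e"
proof -
  have "((\<lambda>t. S t w) \<longlongrightarrow> w) (at_right 0)" using sg_basic(4)[OF assms(1)] .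
  then have "eventually (\<lambda>t. dist (S t w) w < e) (at_right 0)"
    by (rule tendstoD[OF _ assms(2)])
  then obtain b where b: "b > 0" "\<forall>y>0. y < b \<longrightarrow> dist (S y w) w < e"
    unfolding eventually_at_right_field by auto
  show ?thesis
  proof (intro exI[of _ b] conjI allI impI)
    fix h :: real assume h: "0 \<le> h \<and> h < b"
    show "norm (S h w - w) < e"
    proof (cases "h = 0")
      case True then show ?thesis using sg_basic(1)[OF assms(1)] assms(2) by simp
    next
      case False then show ?thesis using b h by (simp add: dist_norm)
    qed
  qed (use b in auto)
qed

lemma sg_cont:
  assumes C0: "C0_semigroup S" and Mb: "\<forall>t\<ge>0. onorm (S t) \<le> M" and M1: "M \<ge> 1"
  shows "continuous_on {0..} (\<lambda>\<sigma>. S \<sigma> w)"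
  unfolding continuous_on_iff
proof (intro ballI allI impI)
  fix x e :: real assume x: "x \<in> {0..}" and e: "e > 0"
  obtain d where d: "d > 0" "\<forall>h. 0 \<le> h \<and> h < d \<longrightarrow> norm (S h w - w) < e / M"
    using sg_small[OF C0, of "e / M" w] e M1 by auto
  show "\<exists>d>0. \<forall>x'\<in>{0..}. dist x' x < d \<longrightarrow> dist (S x' w) (S x w) < e"
  proof (intro exI[of _ d] conjI ballI impI)
    fix y assume y: "y \<in> {0::real..}" "dist y x < d"
    show "dist (S y w) (S x w) < e"
    proof (cases "x \<le> y")
      case True
      have eq: "S y w = S x (S (y - x) w)" using sg_basic(3)[OF C0, of x "y - x" w] x True by simp
      have lin: "linear (S x)" using sg_basic(2)[OF C0] x bounded_linear.linear by auto
      have "S y w - S x w = S x (S (y - x) w - w)" using eq linear_diff[OF lin] by simp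
      then have "norm (S y w - S x w) \<le> M * norm (S (y - x) w - w)"
        using sg_bound[OF C0 Mb] x by auto
      also have "\<dots> < M * (e / M)"
        using d y True M1 by (intro mult_strict_left_mono) (auto simp: dist_real_def)
      also have "\<dots> = e" using M1 by simp
      finally show ?thesis by (simp add: dist_norm)
    next
      case False
      have eq: "S x w = S y (S (x - y) w)" using sg_basic(3)[OF C0, of y "x - y" w] y False by simp
      have lin: "linear (S y)" using sg_basic(2)[OF C0] y bounded_linear.linear by auto
      have "S y w - S x w = S y (w - S (x - y) w)" using eq linear_diff[OF lin] by simp
      then have "norm (S y w - S x w) \<le> M * norm (w - S (x - y) w)"
        using sg_bound[OF C0 Mb] y by auto
      also have "\<dots> < M * (e / M)"
        using d y False M1 by (intro mult_strict_left_mono) (auto simp: dist_real_def norm_minus_commute)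
      also have "\<dots> = e" using M1 by simp
      finally show ?thesis by (simp add: dist_norm)
    qed
  qed (use d in auto)
qed

lemma sg_deriv:
  assumes C0: "C0_semigroup S" and Mb: "\<forall>t\<ge>0. onorm (S t) \<le> M" and M1: "M \<ge> 1"
    and lim: "((\<lambda>h. (1 / h) *\<^sub>R (S h z - z)) \<longlongrightarrow> y) (at_right 0)" and \<sigma>: "\<sigma> \<ge> 0"
  shows "((\<lambda>\<sigma>. S \<sigma> z) has_vector_derivative S \<sigma> y) (at \<sigma> within {0..})"
  unfolding has_vector_derivative_def has_derivative_within_alt
proof (intro conjI allI impI)
  show "bounded_linear (\<lambda>h. h *\<^sub>R S \<sigma> y)" by (rule bounded_linear_scaleR_left)
  fix e :: real assume e: "e > 0"
  have e2: "e / (2 * M) > 0" using e M1 by simp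
  have "eventually (\<lambda>h. dist ((1 / h) *\<^sub>R (S h z - z)) y < e / (2 * M)) (at_right 0)"
    by (rule tendstoD[OF lim e2])
  then obtain b1 where b1: "b1 > 0" "\<forall>h>0. h < b1 \<longrightarrow> dist ((1 / h) *\<^sub>R (S h z - z)) y < e / (2 * M)"
    unfolding eventually_at_right_field by auto
  obtain b2 where b2: "b2 > 0" "\<forall>h. 0 \<le> h \<and> h < b2 \<longrightarrow> norm (S h y - y) < e / (2 * M)"
    using sg_small[OF C0 e2] by blast
  have key: "norm (S h z - z - h *\<^sub>R y) \<le> h * (e / (2 * M))" if h: "0 < h" "h < b1" for h
  proof -
    have "S h z - z - h *\<^sub>R y = h *\<^sub>R ((1 / h) *\<^sub>R (S h z - z) - y)"
      using h by (simp add: algebra_simps)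
    then have "norm (S h z - z - h *\<^sub>R y) = h * norm ((1 / h) *\<^sub>R (S h z - z) - y)"
      using h by simp
    also have "\<dots> \<le> h * (e / (2 * M))"
      using b1(2) h by (intro mult_left_mono) (auto simp: dist_norm less_imp_le)
    finally show ?thesis .
  qed
  show "\<exists>d>0. \<forall>x'\<in>{0..}. norm (x' - \<sigma>) < d \<longrightarrow>
      norm (S x' z - S \<sigma> z - (x' - \<sigma>) *\<^sub>R S \<sigma> y) \<le> e * norm (x' - \<sigma>)"
  proof (intro exI[of _ "min b1 b2"] conjI ballI impI)
    fix x' :: real assume x': "x' \<in> {0..}" "norm (x' - \<sigma>) < min b1 b2"
    consider "x' = \<sigma>" | "x' > \<sigma>" | "x' < \<sigma>" by linarith
    then show "norm (S x' z - S \<sigma> z - (x' - \<sigma>) *\<^sub>R S \<sigma> y) \<le> e * norm (x' - \<sigma>)"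
    proof cases
      case 1 then show ?thesis by simp
    next
      case 2
      define h where "h = x' - \<sigma>"
      have h: "0 < h" "h < b1" using 2 x' by (auto simp: h_def)
      have lin: "linear (S \<sigma>)" using sg_basic(2)[OF C0] \<sigma> bounded_linear.linear by auto
      have eq: "S x' z = S \<sigma> (S h z)" using sg_basic(3)[OF C0, of \<sigma> h z] \<sigma> h by (simp add: h_def)
      have "S x' z - S \<sigma> z - (x' - \<sigma>) *\<^sub>R S \<sigma> y = S \<sigma> (S h z - z - h *\<^sub>R y)"
        unfolding eq h_def[symmetric] by (simp add: linear_diff[OF lin] linear_scale[OF lin])
      then have "norm (S x' z - S \<sigma> z - (x' - \<sigma>) *\<^sub>R S \<sigma> y) \<le> M * norm (S h z - z - h *\<^sub>R y)"
        using sg_bound[OF C0 Mb \<sigma>] by simp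
      also have "\<dots> \<le> M * (h * (e / (2 * M)))"
        using key[OF h] M1 by (intro mult_left_mono) auto
      also have "\<dots> \<le> e * norm (x' - \<sigma>)" using M1 h e by (simp add: h_def)
      finally show ?thesis .
    next
      case 3
      define h where "h = \<sigma> - x'"
      have h: "0 < h" "h < b1" "h < b2" using 3 x' by (auto simp: h_def)
      have x0: "x' \<ge> 0" using x' by auto
      have lin: "linear (S x')" using sg_basic(2)[OF C0] x0 bounded_linear.linear by auto
      have eq1: "S \<sigma> z = S x' (S h z)" using sg_basic(3)[OF C0, of x' h z] x0 h by (simp add: h_def)
      have eq2: "S \<sigma> y = S x' (S h y)" using sg_basic(3)[OF C0, of x' h y] x0 h by (simp add: h_def)
      have "S x' z - S \<sigma> z - (x' - \<sigma>) *\<^sub>R S \<sigma> y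
          = S x' (h *\<^sub>R (S h y - y) - (S h z - z - h *\<^sub>R y))"
      proof -
        have xs: "x' - \<sigma> = - h" by (simp add: h_def)
        show ?thesis unfolding eq1 eq2 xs
          by (simp add: linear_diff[OF lin] linear_scale[OF lin] linear_add[OF lin] algebra_simps)
      qed
      then have "norm (S x' z - S \<sigma> z - (x' - \<sigma>) *\<^sub>R S \<sigma> y)
          \<le> M * norm (h *\<^sub>R (S h y - y) - (S h z - z - h *\<^sub>R y))"
        using sg_bound[OF C0 Mb x0] by simp
      also have "\<dots> \<le> M * (h * (e / (2 * M)) + h * (e / (2 * M)))"
      proof (intro mult_left_mono)
        have "norm (h *\<^sub>R (S h y - y)) \<le> h * (e / (2 * M))"
        proof -
          have "norm (S h y - y) \<le> e / (2 * M)" using b2(2) h by (simp add: less_imp_le)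
          then have "h * norm (S h y - y) \<le> h * (e / (2 * M))" using h by (intro mult_left_mono) auto
          then show ?thesis using h by simp
        qed
        then show "norm (h *\<^sub>R (S h y - y) - (S h z - z - h *\<^sub>R y)) \<le> h * (e / (2 * M)) + h * (e / (2 * M))"
          using key[OF h(1,2)] norm_triangle_ineq4 by (smt (verit))
      qed (use M1 in auto)
      also have "\<dots> = e * norm (x' - \<sigma>)" using M1 h e by (simp add: h_def field_simps)
      finally show ?thesis .
    qed
  qed (use b1 b2 in auto)
qed

lemma f_local:
  fixes f :: "real \<Rightarrow> 'x::banach \<Rightarrow> 'x" and u :: "real \<Rightarrow> 'x"
  assumes A4: "\<exists>f'. (\<forall>q\<in>{0..T} \<times> UNIV.
               ((\<lambda>(t, x). f t x) has_derivative blinfun_apply (f' q)) (at q within {0..T} \<times> UNIV))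
             \<and> continuous_on ({0..T} \<times> UNIV) f'"
    and uc: "continuous_on {0..T} u"
  shows "\<exists>e>0. \<exists>L\<ge>0. \<forall>t\<in>{0..T}. \<forall>\<tau>\<in>{0..T}. \<forall>x. \<bar>\<tau> - t\<bar> + norm (x - u t) < e \<longrightarrow>
           norm (f \<tau> x - f t (u t)) \<le> L * (\<bar>\<tau> - t\<bar> + norm (x - u t))"
proof -
  obtain f' where d: "\<forall>q\<in>{0..T} \<times> UNIV.
               ((\<lambda>(t, x). f t x) has_derivative blinfun_apply (f' q)) (at q within {0..T} \<times> UNIV)"
    and c: "continuous_on ({0..T} \<times> UNIV) f'" using A4 by blast
  define W where "W = {0..T} \<times> (UNIV :: 'x set)"
  define \<Gamma> where "\<Gamma> = (\<lambda>t. (t, u t)) ` {0..T}"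
  have cG: "compact \<Gamma>" unfolding \<Gamma>_def
    by (intro compact_continuous_image continuous_on_Pair continuous_on_id uc) simp
  have GW: "\<Gamma> \<subseteq> W" unfolding \<Gamma>_def W_def by auto
  have "bounded (f' ` \<Gamma>)"
    by (intro compact_imp_bounded compact_continuous_image continuous_on_subset[OF c] cG)
      (use GW W_def in auto)
  then obtain N where N: "\<forall>g\<in>\<Gamma>. norm (f' g) \<le> N" unfolding bounded_iff by auto
  have "\<forall>g\<in>\<Gamma>. \<exists>r. r > 0 \<and> (\<forall>q\<in>W. dist q g < r \<longrightarrow> dist (f' q) (f' g) < 1)"
  proof
    fix g assume "g \<in> \<Gamma>"
    then have "g \<in> W" using GW by blast
    then show "\<exists>r. r > 0 \<and> (\<forall>q\<in>W. dist q g < r \<longrightarrow> dist (f' q) (f' g) < 1)"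
    proof -
      have "\<forall>e>0. \<exists>d>0. \<forall>x'\<in>W. dist x' g < d \<longrightarrow> dist (f' x') (f' g) < e"
        using c \<open>g \<in> W\<close> unfolding continuous_on_iff W_def by blast
      from this[rule_format, OF zero_less_one] show ?thesis by blast
    qed
  qed
  then have "\<exists>r. \<forall>g\<in>\<Gamma>. r g > 0 \<and> (\<forall>q\<in>W. dist q g < r g \<longrightarrow> dist (f' q) (f' g) < 1)"
    by (rule bchoice)
  then obtain r where r: "\<forall>g\<in>\<Gamma>. r g > 0 \<and> (\<forall>q\<in>W. dist q g < r g \<longrightarrow> dist (f' q) (f' g) < 1)"
    by blast
  obtain \<epsilon> where eps: "0 < \<epsilon>" "\<And>g. g \<in> \<Gamma> \<Longrightarrow> \<exists>G \<in> (\<lambda>g. ball g (r g)) ` \<Gamma>. ball g \<epsilon> \<subseteq> G"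
    by (rule Heine_Borel_lemma[OF cG, of "(\<lambda>g. ball g (r g)) ` \<Gamma>"]) (use r in auto)
  show ?thesis
  proof (rule exI[of _ \<epsilon>], intro exI[of _ "\<bar>N\<bar> + 1"] conjI ballI allI impI)
    fix t \<tau> :: real and x :: 'x
    assume t: "t \<in> {0..T}" and \<tau>: "\<tau> \<in> {0..T}" and cl: "\<bar>\<tau> - t\<bar> + norm (x - u t) < \<epsilon>"
    define g where "g = (t, u t)"
    have g: "g \<in> \<Gamma>" using t by (simp add: \<Gamma>_def g_def)
    obtain g' where g': "g' \<in> \<Gamma>" "ball g \<epsilon> \<subseteq> ball g' (r g')" using eps(2)[OF g] by auto
    define Sb where "Sb = ball g \<epsilon> \<inter> W"
    have cv: "convex Sb" unfolding Sb_def W_def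
      by (intro convex_Int convex_ball convex_Times) auto
    have dq: "((\<lambda>(t, x). f t x) has_derivative blinfun_apply (f' q)) (at q within Sb)" if "q \<in> Sb" for q
      using d that by (auto simp: Sb_def W_def intro: has_derivative_subset)
    have bq: "onorm (blinfun_apply (f' q)) \<le> \<bar>N\<bar> + 1" if "q \<in> Sb" for q
    proof -
      have "q \<in> ball g' (r g')" "q \<in> W" using that g' by (auto simp: Sb_def)
      then have "dist (f' q) (f' g') < 1" using r g' by (auto simp: dist_commute)
      then have "norm (f' q) \<le> norm (f' g') + 1"
        using norm_triangle_sub[of "f' q" "f' g'"] by (simp add: dist_norm)
      moreover have "norm (f' g') \<le> N" using N g' by blast
      ultimately show ?thesis by (simp add: norm_blinfun.rep_eq[symmetric])
    qed
    have nq: "norm ((\<tau>, x) - g) \<le> \<bar>\<tau> - t\<bar> + norm (x - u t)"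
      using norm_Pair_le[of "\<tau> - t" "x - u t"] by (simp add: g_def)
    have qS: "(\<tau>, x) \<in> Sb" using nq cl \<tau> by (auto simp: Sb_def W_def dist_norm norm_minus_commute)
    have gS: "g \<in> Sb" using eps(1) GW g by (auto simp: Sb_def)
    have "norm ((\<lambda>(t, x). f t x) (\<tau>, x) - (\<lambda>(t, x). f t x) g) \<le> (\<bar>N\<bar> + 1) * norm ((\<tau>, x) - g)"
      by (rule differentiable_bound[OF cv dq bq qS gS])
    also have "\<dots> \<le> (\<bar>N\<bar> + 1) * (\<bar>\<tau> - t\<bar> + norm (x - u t))"
      by (intro mult_left_mono nq) auto
    finally have X: "norm (f \<tau> x - f t (u t)) \<le> (\<bar>N\<bar> + 1) * (\<bar>\<tau> - t\<bar> + norm (x - u t))"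
      by (simp add: g_def)
    show "norm (f \<tau> x - f t (u t)) \<le> (\<bar>N\<bar> + 1) * (\<bar>\<tau> - t\<bar> + norm (x - u t))"
      by (rule X)
  qed (use eps in auto)
qed

lemma dbound:
  fixes g :: "real \<Rightarrow> 'a::real_normed_vector"
  assumes ab: "a \<le> b"
    and d: "\<And>s. s \<in> {a..b} \<Longrightarrow> (g has_vector_derivative g' s) (at s within {a..b})"
    and B: "\<And>s. s \<in> {a..b} \<Longrightarrow> norm (g' s) \<le> B"
  shows "norm (g b - g a) \<le> B * (b - a)"
proof -
  have "norm (g b - g a) \<le> B * norm (b - a)"
  proof (rule differentiable_bound[where f'="\<lambda>s h. h *\<^sub>R g' s"])
    show "convex {a..b}" by simp
    show "(g has_derivative (\<lambda>h. h *\<^sub>R g' x)) (at x within {a..b})" if "x \<in> {a..b}" for x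
      using d[OF that] by (simp add: has_vector_derivative_def)
    show "onorm (\<lambda>h. h *\<^sub>R g' x) \<le> B" if "x \<in> {a..b}" for x
      using B[OF that] onorm_scaleR_left[OF bounded_linear_ident, of "g' x"] by (simp add: onorm_id)
  qed (use ab in auto)
  then show ?thesis using ab by simp
qed

lemma ode_local:
  fixes v :: "real \<Rightarrow> 'x::real_normed_vector" and F :: "real \<Rightarrow> 'x \<Rightarrow> 'x"
  assumes h: "h \<ge> 0" and v0: "v 0 = x0"
    and d: "\<forall>s\<in>{0..h}. (v has_vector_derivative F s (v s)) (at s within {0..h})"
    and bnd: "\<forall>s\<in>{0..h}. \<forall>x. norm (x - x0) \<le> \<rho> \<longrightarrow> norm (F s x) \<le> B"
    and lip: "\<forall>s\<in>{0..h}. \<forall>x. norm (x - x0) \<le> \<rho> \<longrightarrow> norm (F s x - F0) \<le> L * (s + norm (x - x0)) + D"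
    and small: "B * h < \<rho>" and L: "L \<ge> 0" and B: "B \<ge> 0"
  shows "norm (v h - x0 - h *\<^sub>R F0) \<le> (L * (h + B * h) + D) * h"
proof -
  have rho: "\<rho> > 0" using small B h by (smt (verit) mult_nonneg_nonneg)
  have cv: "continuous_on {0..h} v"
    using d by (auto simp: continuous_on_eq_continuous_within intro: has_vector_derivative_continuous)
  have dsub: "(v has_vector_derivative F q (v q)) (at q within {0..r})" if "q \<in> {0..r}" "r \<le> h" for q r
    using d that by (auto intro: has_vector_derivative_within_subset[of _ _ _ "{0..h}"])
  have stay0: "\<forall>s\<in>{0..h}. norm (v s - x0) < \<rho>"
  proof (rule ccontr)
    assume neg: "\<not> (\<forall>s\<in>{0..h}. norm (v s - x0) < \<rho>)"
    define P where "P = {0..h} \<inter> (\<lambda>s. norm (v s - x0)) -` {\<rho>..}"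
    have Pne: "P \<noteq> {}" using neg by (auto simp: P_def not_less)
    have cP: "closed P" unfolding P_def
      by (intro continuous_closed_preimage continuous_on_norm continuous_on_diff cv continuous_on_const) auto
    have bP: "bdd_below P" unfolding P_def by (auto intro: bdd_belowI[of _ 0])
    define s1 where "s1 = Inf P"
    have s1P: "s1 \<in> P" unfolding s1_def by (rule closed_contains_Inf[OF Pne bP cP])
    have below: "norm (v r - x0) < \<rho>" if "r \<in> {0..<s1}" for r
    proof (rule ccontr)
      assume "\<not> ?thesis"
      then have "r \<in> P" using that s1P by (auto simp: P_def not_less)
      then have "s1 \<le> r" unfolding s1_def by (rule cInf_lower[OF _ bP])
      then show False using that by auto
    qed
    have s1h: "s1 \<in> {0..h}" using s1P by (auto simp: P_def)
    have s1pos: "s1 > 0"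
    proof (rule ccontr)
      assume "\<not> s1 > 0"
      then have "s1 = 0" using s1h by auto
      then show False using s1P rho v0 by (auto simp: P_def)
    qed
    have le: "norm (v r - x0) \<le> B * h" if "r \<in> {0..<s1}" for r
    proof -
      have "norm (v r - v 0) \<le> B * (r - 0)"
      proof (rule dbound[where g'="\<lambda>q. F q (v q)"])
        show "(v has_vector_derivative F q (v q)) (at q within {0..r})" if "q \<in> {0..r}" for q
          using dsub[OF that] \<open>r \<in> {0..<s1}\<close> s1h by auto
        show "norm (F q (v q)) \<le> B" if "q \<in> {0..r}" for q
          using bnd below[of q] that \<open>r \<in> {0..<s1}\<close> s1h by auto
      qed (use that in auto)
      also have "\<dots> \<le> B * h" using that s1h B by (intro mult_left_mono) auto
      finally show ?thesis using v0 by simp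
    qed
    have "norm (v s1 - x0) \<le> B * h"
    proof (rule continuous_le_on_closure[where S="{0..<s1}" and f="\<lambda>r. norm (v r - x0)"])
      show "continuous_on (closure {0..<s1}) (\<lambda>r. norm (v r - x0))"
        using s1pos s1h by (auto intro!: continuous_on_norm continuous_on_diff continuous_on_const
            intro: continuous_on_subset[OF cv])
      show "s1 \<in> closure {0..<s1}" using s1pos by simp
    qed (use le in auto)
    then show False using s1P small by (auto simp: P_def)
  qed
  have stay: "norm (v s - x0) \<le> B * s" if "s \<in> {0..h}" for s
  proof -
    have "norm (v s - v 0) \<le> B * (s - 0)"
    proof (rule dbound[where g'="\<lambda>q. F q (v q)"])
      show "(v has_vector_derivative F q (v q)) (at q within {0..s})" if "q \<in> {0..s}" for q
        using dsub[OF that] \<open>s \<in> {0..h}\<close> by auto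
      show "norm (F q (v q)) \<le> B" if "q \<in> {0..s}" for q
        using bnd stay0 that \<open>s \<in> {0..h}\<close> by (auto simp: less_imp_le)
    qed (use that in auto)
    then show ?thesis using v0 by simp
  qed
  have "norm ((v h - h *\<^sub>R F0) - (v 0 - 0 *\<^sub>R F0)) \<le> (L * (h + B * h) + D) * (h - 0)"
  proof (rule dbound[where g'="\<lambda>q. F q (v q) - F0"])
    show "((\<lambda>s. v s - s *\<^sub>R F0) has_vector_derivative F q (v q) - F0) (at q within {0..h})"
      if "q \<in> {0..h}" for q
      using d that by (auto intro!: derivative_eq_intros)
    show "norm (F q (v q) - F0) \<le> L * (h + B * h) + D" if "q \<in> {0..h}" for q
    proof -
      have "norm (F q (v q) - F0) \<le> L * (q + norm (v q - x0)) + D"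
        using lip stay0 that by (auto simp: less_imp_le)
      also have "\<dots> \<le> L * (h + B * h) + D"
      proof -
        have "B * q \<le> B * h" using that B by (intro mult_left_mono) auto
        then have "q + norm (v q - x0) \<le> h + B * h" using stay[OF that] that by auto
        then show ?thesis using L by (intro add_right_mono mult_left_mono) auto
      qed
      finally show ?thesis .
    qed
  qed (use h in auto)
  then show ?thesis using v0 by (simp add: algebra_simps)
qed

lemma lin_on:
  assumes "linear_on D L" "x \<in> D" "y \<in> D"
  shows "L (x + y) = L x + L y" "L (c *\<^sub>R x) = c *\<^sub>R L x" "L (x - y) = L x - L y"
    "x + y \<in> D" "c *\<^sub>R x \<in> D" "x - y \<in> D"
proof -
  have sub: "subspace D" using assms(1) by (simp add: linear_on_def)
  show a: "L (x + y) = L x + L y" "L (c *\<^sub>R x) = c *\<^sub>R L x"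
    using assms by (auto simp: linear_on_def)
  show "x + y \<in> D" "c *\<^sub>R x \<in> D" "x - y \<in> D"
    using subspace_add[OF sub assms(2,3)] subspace_scale[OF sub assms(2)] subspace_diff[OF sub assms(2,3)] by auto
  have "(-1) *\<^sub>R y \<in> D" by (rule subspace_scale[OF sub assms(3)])
  have ad: "\<forall>x\<in>D. \<forall>y\<in>D. L (x + y) = L x + L y" and sc: "\<forall>c. \<forall>x\<in>D. L (c *\<^sub>R x) = c *\<^sub>R L x"
    using assms(1) unfolding linear_on_def by auto
  have "L (x + (-1) *\<^sub>R y) = L x + L ((-1) *\<^sub>R y)" using ad assms(2) \<open>(-1) *\<^sub>R y \<in> D\<close> by blast
  also have "L ((-1) *\<^sub>R y) = (-1) *\<^sub>R L y" using sc assms(3) by blast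
  finally show "L (x - y) = L x - L y" by simp
qed

lemma wbar_est:
  fixes A :: "'x::banach \<Rightarrow> 'x" and bd :: "'x \<Rightarrow> 'y::real_normed_vector"
  assumes C0: "C0_semigroup S" and Mb: "\<forall>t\<ge>0. onorm (S t) \<le> M" and M1: "M \<ge> 1"
    and A_lin: "linear_on DA A" and bd_lin: "linear_on DA bd"
    and gen: "generates {x \<in> DA. bd x = 0} A S"
    and K0: "\<forall>v. K 0 v \<in> DA \<and> A (K 0 v) = 0 \<and> bd (K 0 v) = v"
    and Kuniq: "\<forall>v. \<forall>x\<in>DA. A x = 0 \<and> bd x = v \<longrightarrow> x = K 0 v"
    and uD: "ut \<in> DA" and AuD: "A ut \<in> DA" and fD: "ft \<in> DA"
    and k: "k \<ge> 0" and hh: "hh \<ge> 0"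
  shows "norm (gen_sol S K a (bd (ut + hh *\<^sub>R ft)) (bd (A ut)) k - (ut + hh *\<^sub>R ft) - k *\<^sub>R A ut)
     \<le> M * norm (a - (ut + hh *\<^sub>R ft)) + k * (M * norm (A (A ut)) * k + hh * M * norm (A ft))"
proof -
  define y where "y = ut + hh *\<^sub>R ft"
  define v0 where "v0 = bd y"
  define v1 where "v1 = bd (A ut)"
  define z0 where "z0 = y - K 0 v0"
  define x1 where "x1 = A ut - K 0 v1"
  define I where "I = (\<lambda>s. integral {0..s} (\<lambda>\<sigma>. S \<sigma> (K 0 v1)))"
  have hfD: "hh *\<^sub>R ft \<in> DA" by (rule lin_on(5)[OF A_lin fD fD])
  have yD: "y \<in> DA" unfolding y_def by (rule lin_on(4)[OF A_lin uD hfD])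
  have Ay: "A y = A ut + hh *\<^sub>R A ft" unfolding y_def
    by (simp only: lin_on(1)[OF A_lin uD hfD] lin_on(2)[OF A_lin fD fD])
  have K0D: "K 0 v \<in> DA" "A (K 0 v) = 0" "bd (K 0 v) = v" for v using K0 by auto
  have z0D: "z0 \<in> DA" "bd z0 = 0" "A z0 = A y"
    unfolding z0_def v0_def
    by (simp_all only: lin_on(6)[OF A_lin yD K0D(1)] lin_on(3)[OF A_lin yD K0D(1)] lin_on(3)[OF bd_lin yD K0D(1)] K0D(2,3)) simp_all
  have x1D: "x1 \<in> DA" "bd x1 = 0" "A x1 = A (A ut)"
    unfolding x1_def v1_def
    by (simp_all only: lin_on(6)[OF A_lin AuD K0D(1)] lin_on(3)[OF A_lin AuD K0D(1)] lin_on(3)[OF bd_lin AuD K0D(1)] K0D(2,3)) simp_all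
  have lim: "((\<lambda>h. (1 / h) *\<^sub>R (S h x - x)) \<longlongrightarrow> A x) (at_right 0)" if "x \<in> DA" "bd x = 0" for x
    using gen that unfolding generates_def by auto
  have Kl: "K 0 (v0 + k *\<^sub>R v1) = K 0 v0 + k *\<^sub>R K 0 v1"
  proof -
    have D1: "K 0 v0 + k *\<^sub>R K 0 v1 \<in> DA" and e1: "A (K 0 v0 + k *\<^sub>R K 0 v1) = 0"
      and e2: "bd (K 0 v0 + k *\<^sub>R K 0 v1) = v0 + k *\<^sub>R v1"
    proof -
      have kD: "k *\<^sub>R K 0 v1 \<in> DA" by (rule lin_on(5)[OF A_lin K0D(1) K0D(1)])
      show "K 0 v0 + k *\<^sub>R K 0 v1 \<in> DA" by (rule lin_on(4)[OF A_lin K0D(1) kD])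
      show "A (K 0 v0 + k *\<^sub>R K 0 v1) = 0"
        by (simp only: lin_on(1)[OF A_lin K0D(1) kD] lin_on(2)[OF A_lin K0D(1) K0D(1)] K0D(2)) simp
      show "bd (K 0 v0 + k *\<^sub>R K 0 v1) = v0 + k *\<^sub>R v1"
        by (simp only: lin_on(1)[OF bd_lin K0D(1) kD] lin_on(2)[OF bd_lin K0D(1) K0D(1)] K0D(3))
    qed
    have "K 0 v0 + k *\<^sub>R K 0 v1 = K 0 (v0 + k *\<^sub>R v1)"
      using Kuniq D1 e1 e2 by blast
    then show ?thesis by (rule sym)
  qed
  have lin: "linear (S s)" if "s \<ge> 0" for s using sg_basic(2)[OF C0 that] bounded_linear.linear by blast
  have S0: "S 0 x = x" for x using sg_basic(1)[OF C0] by simp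
  define G where "G = (\<lambda>s. S s z0 + s *\<^sub>R K 0 v1 - I s - s *\<^sub>R A ut)"
  have main: "gen_sol S K a v0 v1 k - y - k *\<^sub>R A ut = S k (a - y) + (G k - G 0)"
    unfolding gen_sol_def G_def I_def Kl z0_def
    using k by (simp add: S0 linear_diff[OF lin] algebra_simps)
  have Sx1: "norm (S s x1 - x1) \<le> M * norm (A (A ut)) * s" if "s \<ge> 0" for s
  proof -
    have "norm (S s x1 - S 0 x1) \<le> (M * norm (A (A ut))) * (s - 0)"
    proof (rule dbound[where g'="\<lambda>\<sigma>. S \<sigma> (A x1)"])
      show "((\<lambda>\<sigma>. S \<sigma> x1) has_vector_derivative S \<sigma> (A x1)) (at \<sigma> within {0..s})" if "\<sigma> \<in> {0..s}" for \<sigma>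
        using sg_deriv[OF C0 Mb M1 lim[OF x1D(1,2)], of \<sigma>] that
        by (auto intro: has_vector_derivative_within_subset)
      show "norm (S \<sigma> (A x1)) \<le> M * norm (A (A ut))" if "\<sigma> \<in> {0..s}" for \<sigma>
        using sg_bound[OF C0 Mb, of \<sigma> "A x1"] that x1D by auto
    qed (use that in auto)
    then show ?thesis using S0 by simp
  qed
  have cS: "continuous_on {0..k} (\<lambda>\<sigma>. S \<sigma> (K 0 v1))"
    using sg_cont[OF C0 Mb M1] by (rule continuous_on_subset) auto
  have "norm (G k - G 0) \<le> (M * norm (A (A ut)) * k + hh * M * norm (A ft)) * (k - 0)"
  proof (rule dbound[where g'="\<lambda>s. S s (A z0) + K 0 v1 - S s (K 0 v1) - A ut"])
    show "(G has_vector_derivative S s (A z0) + K 0 v1 - S s (K 0 v1) - A ut) (at s within {0..k})"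
      if "s \<in> {0..k}" for s
    proof -
      have d1: "((\<lambda>\<sigma>. S \<sigma> z0) has_vector_derivative S s (A z0)) (at s within {0..k})"
        using sg_deriv[OF C0 Mb M1 lim[OF z0D(1,2)], of s] that
        by (auto intro: has_vector_derivative_within_subset)
      have d2: "(I has_vector_derivative S s (K 0 v1)) (at s within {0..k})"
        unfolding I_def by (rule integral_has_vector_derivative[OF cS that])
      have lc: "((\<lambda>s. s *\<^sub>R c) has_vector_derivative c) (at s within {0..k})" for c :: 'x
        unfolding has_vector_derivative_def by (rule bounded_linear_imp_has_derivative[OF bounded_linear_scaleR_left])
      show ?thesis unfolding G_def
        by (intro has_vector_derivative_diff has_vector_derivative_add d1 d2 lc)
    qed
    show "norm (S s (A z0) + K 0 v1 - S s (K 0 v1) - A ut) \<le> M * norm (A (A ut)) * k + hh * M * norm (A ft)"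
      if "s \<in> {0..k}" for s
    proof -
      have s0: "s \<ge> 0" using that by auto
      have "S s (A z0) + K 0 v1 - S s (K 0 v1) - A ut = (S s x1 - x1) + hh *\<^sub>R S s (A ft)"
        unfolding z0D(3) Ay x1_def
        by (simp add: linear_diff[OF lin[OF s0]] linear_add[OF lin[OF s0]] linear_scale[OF lin[OF s0]] algebra_simps)
      also have "norm \<dots> \<le> M * norm (A (A ut)) * s + hh * (M * norm (A ft))"
      proof -
        have "norm ((S s x1 - x1) + hh *\<^sub>R S s (A ft)) \<le> norm (S s x1 - x1) + norm (hh *\<^sub>R S s (A ft))"
          by (rule norm_triangle_ineq)
        also have "norm (hh *\<^sub>R S s (A ft)) = hh * norm (S s (A ft))" using hh by simp
        also have "hh * norm (S s (A ft)) \<le> hh * (M * norm (A ft))"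
          using sg_bound[OF C0 Mb s0, of "A ft"] hh by (rule mult_left_mono)
        finally show ?thesis using Sx1[OF s0] by linarith
      qed
      also have "\<dots> \<le> M * norm (A (A ut)) * k + hh * M * norm (A ft)"
        using that M1 by (simp add: mult_left_mono)
      finally show ?thesis .
    qed
  qed (use k in auto)
  then have Gb: "norm (G k - G 0) \<le> k * (M * norm (A (A ut)) * k + hh * M * norm (A ft))"
    by (simp add: mult.commute)
  have "norm (S k (a - y)) \<le> M * norm (a - y)" using sg_bound[OF C0 Mb k] .
  then have "norm (S k (a - y) + (G k - G 0)) \<le> M * norm (a - y) + k * (M * norm (A (A ut)) * k + hh * M * norm (A ft))"
    using Gb norm_triangle_ineq[of "S k (a - y)" "G k - G 0"] by linarith
  then show ?thesis using main unfolding y_def v0_def v1_def by simp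
qed

lemma cont_bound:
  fixes g :: "real \<Rightarrow> 'a::real_normed_vector"
  assumes "continuous_on {a..b} g"
  shows "\<exists>B\<ge>0. \<forall>t\<in>{a..b}. norm (g t) \<le> B"
proof -
  have "bounded (g ` {a..b})" by (intro compact_imp_bounded compact_continuous_image assms) simp
  then obtain B where "\<forall>x\<in>g ` {a..b}. norm x \<le> B" unfolding bounded_iff by blast
  then show ?thesis by (intro exI[of _ "max B 0"]) (auto intro: le_max_iff_disj[THEN iffD2])
qed

lemma C1_cont: "C1_on S g \<Longrightarrow> continuous_on S g"
  unfolding C1_on_def
  by (auto simp: continuous_on_eq_continuous_within intro: has_vector_derivative_continuous)

lemma deriv_cont: "\<forall>t\<in>S. (g has_vector_derivative g' t) (at t within S) \<Longrightarrow> continuous_on S g"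
  by (auto simp: continuous_on_eq_continuous_within intro: has_vector_derivative_continuous)

theorem theorem4p2:
  fixes A :: "'x::banach \<Rightarrow> 'x" and DA :: "'x set"
    and bd :: "'x \<Rightarrow> 'y::banach"
    and S :: "real \<Rightarrow> 'x \<Rightarrow> 'x" and \<omega> :: real
    and K :: "real \<Rightarrow> 'y \<Rightarrow> 'x"
    and f :: "real \<Rightarrow> 'x \<Rightarrow> 'x" and g :: "real \<Rightarrow> 'y"
    and u :: "real \<Rightarrow> 'x" and T :: real
    and Psi :: "real \<Rightarrow> real \<Rightarrow> 'x \<Rightarrow> 'x" and p :: nat
  assumes T_pos: "T > 0"
    and A_lin: "linear_on DA A" and bd_lin: "linear_on DA bd"
    and A1: "bd ` DA = UNIV"
    and A2_dense: "closure {x \<in> DA. bd x = 0} = UNIV"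
    and A2_gen: "generates {x \<in> DA. bd x = 0} A S"
    and A2_type: "negative_type S \<omega>"
    and A3_sol: "\<forall>z>\<omega>. \<forall>v. K z v \<in> DA \<and> A (K z v) = z *\<^sub>R K z v \<and> bd (K z v) = v"
    and A3_uniq: "\<forall>z>\<omega>. \<forall>v. \<forall>x\<in>DA. A x = z *\<^sub>R x \<and> bd x = v \<longrightarrow> x = K z v"
    and A3_bound: "\<forall>\<omega>0>\<omega>. \<exists>C. \<forall>z\<ge>\<omega>0. \<forall>v. norm (K z v) \<le> C * norm v"
    and A4: "\<exists>f'. (\<forall>q\<in>{0..T} \<times> UNIV.
               ((\<lambda>(t, x). f t x) has_derivative blinfun_apply (f' q)) (at q within {0..T} \<times> UNIV))
             \<and> continuous_on ({0..T} \<times> UNIV) f'"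
    and u_sol: "\<forall>t\<in>{0..T}. u t \<in> DA \<and>
                 (u has_vector_derivative (A (u t) + f t (u t))) (at t within {0..T}) \<and>
                 bd (u t) = g t"
    and A5_C2: "\<exists>u'. (\<forall>t\<in>{0..T}. (u has_vector_derivative u' t) (at t within {0..T}))
                    \<and> C1_on {0..T} u'"
    and A5_dom: "\<forall>t\<in>{0..T}. u t \<in> DA \<and> A (u t) \<in> DA"
    and A5_C1: "C1_on {0..T} (\<lambda>t. A (u t))" "C1_on {0..T} (\<lambda>t. A (A (u t)))"
    and A6: "\<forall>t\<in>{0..T}. f t (u t) \<in> DA" "continuous_on {0..T} (\<lambda>t. A (f t (u t)))"
    and p_ge: "p \<ge> 1"
    and order: "\<exists>C k0. k0 > 0 \<and> (\<forall>k n. 0 < k \<longrightarrow> k \<le> k0 \<longrightarrow> real (Suc n) * k \<le> T \<longrightarrow>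
        (let tn = real n * k;
             wbar = gen_sol S K (Psi (k / 2) tn (u tn))
                      (bd (u tn + (k / 2) *\<^sub>R f tn (u tn))) (bd (A (u tn)))
         in order_step f Psi p C (k / 2) tn (u tn)
            \<and> order_step f Psi p C (k / 2) (tn + k / 2) (wbar k)))"
  shows "\<exists>C k0. k0 > 0 \<and> (\<forall>k n. 0 < k \<longrightarrow> k \<le> k0 \<longrightarrow> real (Suc n) * k \<le> T \<longrightarrow>
        (let tn = real n * k;
             wbar = gen_sol S K (Psi (k / 2) tn (u tn))
                      (bd (u tn + (k / 2) *\<^sub>R f tn (u tn))) (bd (A (u tn)))
         in norm (Psi (k / 2) (tn + k / 2) (wbar k) - u (real (Suc n) * k)) \<le> C * k ^ 2))"
proof -
  obtain M0 where om: "\<omega> < 0" and M0: "\<forall>t\<ge>0. onorm (S t) \<le> M0 * exp (\<omega> * t)"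
    using A2_type unfolding negative_type_def by blast
  define M where "M = \<bar>M0\<bar> + 1"
  have M1: "M \<ge> 1" by (simp add: M_def)
  have Mb: "\<forall>t\<ge>0. onorm (S t) \<le> M"
  proof (intro allI impI)
    fix t :: real assume t: "t \<ge> 0"
    have "\<omega> * t \<le> 0" using om t by (simp add: mult_nonpos_nonneg)
    then have ex: "exp (\<omega> * t) \<le> 1" "exp (\<omega> * t) > 0" by auto
    have "M0 * exp (\<omega> * t) \<le> \<bar>M0\<bar> * exp (\<omega> * t)" using ex by (intro mult_right_mono) auto
    also have "\<dots> \<le> \<bar>M0\<bar> * 1" using ex by (intro mult_left_mono) auto
    finally have X: "M0 * exp (\<omega> * t) \<le> \<bar>M0\<bar> * 1" .
    have "onorm (S t) \<le> M0 * exp (\<omega> * t)" using M0 t by blast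
    then show "onorm (S t) \<le> M" using X by (simp add: M_def)
  qed
  have C0: "C0_semigroup S" using A2_gen unfolding generates_def by blast
  have K0: "\<forall>v. K 0 v \<in> DA \<and> A (K 0 v) = 0 \<and> bd (K 0 v) = v" using A3_sol om by auto
  have Kuniq: "\<forall>v. \<forall>x\<in>DA. A x = 0 \<and> bd x = v \<longrightarrow> x = K 0 v" using A3_uniq om by auto
  have ud: "\<forall>t\<in>{0..T}. (u has_vector_derivative (A (u t) + f t (u t))) (at t within {0..T})"
    using u_sol by blast
  have uc: "continuous_on {0..T} u" by (rule deriv_cont[OF ud])
  obtain e L where e: "e > 0" and L: "L \<ge> 0" and lipf: "\<forall>t\<in>{0..T}. \<forall>\<tau>\<in>{0..T}. \<forall>x.
      \<bar>\<tau> - t\<bar> + norm (x - u t) < e \<longrightarrow> norm (f \<tau> x - f t (u t)) \<le> L * (\<bar>\<tau> - t\<bar> + norm (x - u t))"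
    using f_local[OF A4 uc] by blast
  obtain u' where u'd: "\<forall>t\<in>{0..T}. (u has_vector_derivative u' t) (at t within {0..T})"
    and u'C1: "C1_on {0..T} u'" using A5_C2 by blast
  obtain u'' where u''d: "\<forall>t\<in>{0..T}. (u' has_vector_derivative u'' t) (at t within {0..T})"
    and u''c: "continuous_on {0..T} u''" using u'C1 unfolding C1_on_def by blast
  have u'eq: "u' t = A (u t) + f t (u t)" if "t \<in> {0..T}" for t
    using vector_derivative_unique_within_closed_interval[of 0 T t u "u' t" "A (u t) + f t (u t)"]
      T_pos that u'd ud by simp
  obtain U1 where U1: "\<forall>t\<in>{0..T}. norm (u' t) \<le> U1" using cont_bound[OF C1_cont[OF u'C1]] by blast
  obtain Am where Am: "Am \<ge> 0" "\<forall>t\<in>{0..T}. norm (A (u t)) \<le> Am" using cont_bound[OF C1_cont[OF A5_C1(1)]] by blast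
  obtain A2 where A2: "A2 \<ge> 0" "\<forall>t\<in>{0..T}. norm (A (A (u t))) \<le> A2" using cont_bound[OF C1_cont[OF A5_C1(2)]] by blast
  obtain Af where Af: "Af \<ge> 0" "\<forall>t\<in>{0..T}. norm (A (f t (u t))) \<le> Af" using cont_bound[OF A6(2)] by blast
  obtain M2 where M2: "M2 \<ge> 0" "\<forall>t\<in>{0..T}. norm (u'' t) \<le> M2" using cont_bound[OF u''c] by blast
  define Fm where "Fm = U1 + Am"
  have fb: "norm (f t (u t)) \<le> Fm" if "t \<in> {0..T}" for t
  proof -
    have "f t (u t) = u' t - A (u t)" using u'eq[OF that] by simp
    then have "norm (f t (u t)) \<le> norm (u' t) + norm (A (u t))" by (simp only: norm_triangle_ineq4)
    moreover have "norm (u' t) \<le> U1" "norm (A (u t)) \<le> Am" using U1 Am that by auto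
    ultimately show ?thesis unfolding Fm_def by linarith
  qed
  have Fm0: "Fm \<ge> 0"
  proof -
    have "norm (f 0 (u 0)) \<le> Fm" using fb T_pos by auto
    then show ?thesis by (meson norm_ge_zero order_trans)
  qed
  have tay: "norm (u (t + k) - u t - k *\<^sub>R u' t) \<le> M2 * k * k"
    if t: "t \<in> {0..T}" "t + k \<le> T" "k \<ge> 0" for t k
  proof -
    have "norm ((\<lambda>s. u s - s *\<^sub>R u' t) (t + k) - (\<lambda>s. u s - s *\<^sub>R u' t) t) \<le> (M2 * k) * (t + k - t)"
    proof (rule dbound[where g'="\<lambda>s. u' s - u' t"])
      show "((\<lambda>s. u s - s *\<^sub>R u' t) has_vector_derivative u' s - u' t) (at s within {t..t + k})"
        if "s \<in> {t..t + k}" for s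
      proof -
        have "(u has_vector_derivative u' s) (at s within {t..t + k})"
          using u'd that t by (auto intro: has_vector_derivative_within_subset[of _ _ _ "{0..T}"])
        moreover have "((\<lambda>s. s *\<^sub>R u' t) has_vector_derivative u' t) (at s within {t..t + k})"
          unfolding has_vector_derivative_def
          by (rule bounded_linear_imp_has_derivative[OF bounded_linear_scaleR_left])
        ultimately show ?thesis by (rule has_vector_derivative_diff)
      qed
      show "norm (u' s - u' t) \<le> M2 * k" if "s \<in> {t..t + k}" for s
      proof -
        have "norm (u' s - u' t) \<le> M2 * (s - t)"
        proof (rule dbound[where g'=u''])
          show "(u' has_vector_derivative u'' r) (at r within {t..s})" if "r \<in> {t..s}" for r
            using u''d that \<open>s \<in> {t..t + k}\<close> t
            by (auto intro: has_vector_derivative_within_subset[of _ _ _ "{0..T}"])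
          show "norm (u'' r) \<le> M2" if "r \<in> {t..s}" for r
            using M2 that \<open>s \<in> {t..t + k}\<close> t by auto
        qed (use that in auto)
        also have "\<dots> \<le> M2 * k" using that M2 by (intro mult_left_mono) auto
        finally show ?thesis .
      qed
    qed (use t in auto)
    then show ?thesis by (simp add: algebra_simps)
  qed
  obtain C k1 where k1: "k1 > 0" and ord: "\<forall>k n. 0 < k \<longrightarrow> k \<le> k1 \<longrightarrow> real (Suc n) * k \<le> T \<longrightarrow>
        (let tn = real n * k;
             wbar = gen_sol S K (Psi (k / 2) tn (u tn))
                      (bd (u tn + (k / 2) *\<^sub>R f tn (u tn))) (bd (A (u tn)))
         in order_step f Psi p C (k / 2) tn (u tn)
            \<and> order_step f Psi p C (k / 2) (tn + k / 2) (wbar k))"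
    using order by blast
  define Cc where "Cc = \<bar>C\<bar>"
  define B where "B = Fm + L * e"
  define c1 where "c1 = Cc + L * (1 + B)"
  define c2 where "c2 = M * c1 + M * A2 + M * Af"
  define c3 where "c3 = c2 + Fm + Am"
  define Cfin where "Cfin = Cc + L * (2 + B + c3) + c2 + M2"
  define k0 where "k0 = min k1 (min 1 (e / (4 * (1 + B + c3))))"
  have B0: "B \<ge> 0" using Fm0 L e by (simp add: B_def)
  have Cc0: "Cc \<ge> 0" by (simp add: Cc_def)
  have c10: "c1 \<ge> 0" using Cc0 L B0 by (simp add: c1_def)
  have c20: "c2 \<ge> 0" using M1 c10 A2 Af by (simp add: c2_def)
  have c30: "c3 \<ge> 0" using c20 Fm0 Am by (simp add: c3_def)
  have k00: "k0 > 0" using k1 e B0 c30 by (simp add: k0_def)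
  show ?thesis
  proof (rule exI[of _ Cfin], rule exI[of _ k0], intro conjI allI impI)
    show "k0 > 0" by (rule k00)
    fix k :: real and n :: nat
    assume k: "0 < k" "k \<le> k0" "real (Suc n) * k \<le> T"
    define tn where "tn = real n * k"
    define h where "h = k / 2"
    define f0 where "f0 = f tn (u tn)"
    define y where "y = u tn + h *\<^sub>R f0"
    define wbar where "wbar = gen_sol S K (Psi (k / 2) tn (u tn))
                      (bd (u tn + (k / 2) *\<^sub>R f tn (u tn))) (bd (A (u tn)))"
    have kk1: "k \<le> k1" "k \<le> 1" and kke: "k * (1 + B + c3) \<le> e / 4"
    proof -
      show "k \<le> k1" "k \<le> 1" using k by (auto simp: k0_def)
      have "k \<le> e / (4 * (1 + B + c3))" using k by (simp add: k0_def)
      then show "k * (1 + B + c3) \<le> e / 4" using B0 c30 by (simp add: field_simps)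
    qed
    have kB: "B * k \<le> e / 4" "k \<le> e / 4" "c3 * k \<le> e / 4"
    proof -
      have nn: "B * k \<ge> 0" "c3 * k \<ge> 0" using B0 c30 k by auto
      have "k * (1 + B + c3) = k + B * k + c3 * k" by (simp add: algebra_simps)
      then show "B * k \<le> e / 4" "k \<le> e / 4" "c3 * k \<le> e / 4" using kke nn k by linarith+
    qed
    have tnT: "tn \<ge> 0" "tn + k \<le> T" using k by (auto simp: tn_def algebra_simps)
    have h: "h > 0" "h \<le> k" "2 * h = k" using k by (auto simp: h_def)
    have os: "order_step f Psi p C h tn (u tn)" "order_step f Psi p C h (tn + h) (wbar k)"
      using ord[rule_format, OF k(1) kk1(1) k(3)] unfolding Let_def tn_def wbar_def h_def by auto
    have hp: "h ^ (p + 1) \<le> k\<^sup>2"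
    proof -
      have "h ^ (p + 1) \<le> h ^ 2" using h kk1 p_ge by (intro power_decreasing) auto
      also have "\<dots> \<le> k ^ 2" using h by (intro power_mono) auto
      finally show ?thesis .
    qed
    have Cerr: "C * h ^ (p + 1) \<le> Cc * k\<^sup>2"
    proof -
      have "C * h ^ (p + 1) \<le> Cc * h ^ (p + 1)" using h by (intro mult_right_mono) (auto simp: Cc_def)
      also have "\<dots> \<le> Cc * k\<^sup>2" using hp Cc0 by (intro mult_left_mono) auto
      finally show ?thesis .
    qed
    have tn0T: "tn \<in> {0..T}" using tnT k by auto
    have fball: "norm (f \<tau> x - f0) \<le> L * (\<bar>\<tau> - tn\<bar> + norm (x - u tn))"
      "norm (f \<tau> x) \<le> B"
      if "\<tau> \<in> {0..T}" "\<bar>\<tau> - tn\<bar> + norm (x - u tn) < e" for \<tau> x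
    proof -
      show a: "norm (f \<tau> x - f0) \<le> L * (\<bar>\<tau> - tn\<bar> + norm (x - u tn))"
        using lipf tn0T that unfolding f0_def by blast
      have "L * (\<bar>\<tau> - tn\<bar> + norm (x - u tn)) \<le> L * e" using that L by (intro mult_left_mono) auto
      moreover have "norm (f \<tau> x) \<le> norm (f \<tau> x - f0) + norm f0" using norm_triangle_sub[of "f \<tau> x" f0] by (simp add: add.commute)
      ultimately show "norm (f \<tau> x) \<le> B" using a fb[OF tn0T] unfolding B_def f0_def by linarith
    qed
    obtain v1 where v10: "v1 0 = u tn"
      and v1d: "\<forall>s\<in>{0..h}. (v1 has_vector_derivative f (tn + s) (v1 s)) (at s within {0..h})"
      and v1e: "norm (Psi h tn (u tn) - v1 h) \<le> C * h ^ (p + 1)"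
      using os(1) unfolding order_step_def by blast
    have st1: "norm (v1 h - u tn - h *\<^sub>R f0) \<le> (L * (h + B * h) + 0) * h"
    proof (rule ode_local[where F="\<lambda>s x. f (tn + s) x" and \<rho>="e / 2"])
      show "\<forall>s\<in>{0..h}. \<forall>x. norm (x - u tn) \<le> e / 2 \<longrightarrow> norm (f (tn + s) x) \<le> B"
      proof (intro ballI allI impI)
        fix s x assume s: "s \<in> {0..h}" and x: "norm (x - u tn) \<le> e / 2"
        show "norm (f (tn + s) x) \<le> B"
          using fball(2)[of "tn + s" x] s x h tnT kB by auto
      qed
      show "\<forall>s\<in>{0..h}. \<forall>x. norm (x - u tn) \<le> e / 2 \<longrightarrow> norm (f (tn + s) x - f0) \<le> L * (s + norm (x - u tn)) + 0"
      proof (intro ballI allI impI)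
        fix s x assume s: "s \<in> {0..h}" and x: "norm (x - u tn) \<le> e / 2"
        show "norm (f (tn + s) x - f0) \<le> L * (s + norm (x - u tn)) + 0"
          using fball(1)[of "tn + s" x] s x h tnT kB by auto
      qed
      show "B * h < e / 2"
      proof -
        have "B * h \<le> B * k" using B0 h by (intro mult_left_mono) auto
        then show ?thesis using kB e by linarith
      qed
    qed (use h v10 v1d L B0 in auto)
    define a where "a = Psi h tn (u tn)"
    have aerr: "norm (a - y) \<le> c1 * k\<^sup>2"
    proof -
      have eq: "a - y = (Psi h tn (u tn) - v1 h) + (v1 h - u tn - h *\<^sub>R f0)" by (simp add: a_def y_def)
      have "norm (a - y) \<le> norm (Psi h tn (u tn) - v1 h) + norm (v1 h - u tn - h *\<^sub>R f0)"
        unfolding eq by (rule norm_triangle_ineq)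
      also have "\<dots> \<le> Cc * k\<^sup>2 + L * (1 + B) * k\<^sup>2"
      proof -
        have "(L * (h + B * h) + 0) * h = L * (1 + B) * (h * h)" by (simp add: algebra_simps)
        also have "\<dots> \<le> L * (1 + B) * k\<^sup>2" using h L B0
          by (intro mult_left_mono) (auto simp: power2_eq_square intro: mult_mono)
        finally show ?thesis using st1 v1e Cerr by linarith
      qed
      finally show ?thesis by (simp add: c1_def algebra_simps)
    qed
    have wb: "norm (wbar k - y - k *\<^sub>R A (u tn)) \<le> c2 * k\<^sup>2"
    proof -
      have "norm (gen_sol S K a (bd (u tn + h *\<^sub>R f0)) (bd (A (u tn))) k - (u tn + h *\<^sub>R f0) - k *\<^sub>R A (u tn))
          \<le> M * norm (a - (u tn + h *\<^sub>R f0)) + k * (M * norm (A (A (u tn))) * k + h * M * norm (A f0))"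
        using A5_dom A6(1) tn0T k h unfolding f0_def
        by (intro wbar_est[where S=S and M=M and DA=DA and A=A and bd=bd and K=K, OF C0 Mb M1 A_lin bd_lin A2_gen K0 Kuniq]) auto
      also have "\<dots> \<le> M * (c1 * k\<^sup>2) + k * (M * A2 * k + k * M * Af)"
      proof (intro add_mono mult_left_mono)
        show "norm (a - (u tn + h *\<^sub>R f0)) \<le> c1 * k\<^sup>2" using aerr by (simp add: y_def)
        show "M * norm (A (A (u tn))) * k \<le> M * A2 * k" using A2 tn0T M1 k by (auto intro: mult_right_mono mult_left_mono)
        show "h * M * norm (A f0) \<le> k * M * Af" using Af tn0T M1 h unfolding f0_def
          by (intro mult_mono) auto
      qed (use M1 k in auto)
      also have "\<dots> = c2 * k\<^sup>2" by (simp add: c2_def power2_eq_square algebra_simps)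
      finally show ?thesis unfolding wbar_def a_def y_def h_def f0_def by simp
    qed
    have d1: "norm (wbar k - u tn) \<le> c3 * k"
    proof -
      have eq: "wbar k - u tn = (wbar k - y - k *\<^sub>R A (u tn)) + h *\<^sub>R f0 + k *\<^sub>R A (u tn)" by (simp add: y_def)
      have "norm (wbar k - u tn) \<le> norm (wbar k - y - k *\<^sub>R A (u tn)) + norm (h *\<^sub>R f0) + norm (k *\<^sub>R A (u tn))"
        unfolding eq by (rule norm_triangle_le, rule add_mono[OF norm_triangle_ineq order_refl])
      also have "\<dots> \<le> c2 * k\<^sup>2 + k * Fm + k * Am"
      proof (intro add_mono)
        show "norm (h *\<^sub>R f0) \<le> k * Fm" using h fb[OF tn0T] unfolding f0_def by (auto intro: mult_mono)
        show "norm (k *\<^sub>R A (u tn)) \<le> k * Am" using k Am tn0T by (auto intro: mult_left_mono)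
      qed (rule wb)
      also have "c2 * k\<^sup>2 \<le> c2 * k" using c20 k kk1 by (intro mult_left_mono) (auto simp: power2_eq_square)
      then have "c2 * k\<^sup>2 + k * Fm + k * Am \<le> c3 * k" by (simp add: c3_def algebra_simps)
      finally show ?thesis .
    qed
    obtain v2 where v20: "v2 0 = wbar k"
      and v2d: "\<forall>s\<in>{0..h}. (v2 has_vector_derivative f (tn + h + s) (v2 s)) (at s within {0..h})"
      and v2e: "norm (Psi h (tn + h) (wbar k) - v2 h) \<le> C * h ^ (p + 1)"
      using os(2) unfolding order_step_def by blast
    have st2: "norm (v2 h - wbar k - h *\<^sub>R f0) \<le> (L * (h + B * h) + L * (h + norm (wbar k - u tn))) * h"
    proof (rule ode_local[where F="\<lambda>s x. f (tn + h + s) x" and \<rho>="e / 4"])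
      have pre: "tn + h + s \<in> {0..T} \<and> \<bar>tn + h + s - tn\<bar> + norm (x - u tn) < e
          \<and> \<bar>tn + h + s - tn\<bar> + norm (x - u tn) \<le> s + norm (x - wbar k) + (h + norm (wbar k - u tn))"
        if s: "s \<in> {0..h}" and x: "norm (x - wbar k) \<le> e / 4" for s x
      proof -
        have nx: "norm (x - u tn) \<le> norm (x - wbar k) + norm (wbar k - u tn)"
          using norm_triangle_ineq[of "x - wbar k" "wbar k - u tn"] by simp
        have "\<bar>tn + h + s - tn\<bar> = h + s" using s h by auto
        then show ?thesis using s h tnT nx x d1 kB e by auto
      qed
      show "\<forall>s\<in>{0..h}. \<forall>x. norm (x - wbar k) \<le> e / 4 \<longrightarrow> norm (f (tn + h + s) x) \<le> B"
        using pre fball(2) by blast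
      show "\<forall>s\<in>{0..h}. \<forall>x. norm (x - wbar k) \<le> e / 4 \<longrightarrow>
          norm (f (tn + h + s) x - f0) \<le> L * (s + norm (x - wbar k)) + L * (h + norm (wbar k - u tn))"
      proof (intro ballI allI impI)
        fix s x assume s: "s \<in> {0..h}" and x: "norm (x - wbar k) \<le> e / 4"
        have "norm (f (tn + h + s) x - f0) \<le> L * (\<bar>tn + h + s - tn\<bar> + norm (x - u tn))"
          using pre[OF s x] fball(1) by blast
        also have "\<dots> \<le> L * (s + norm (x - wbar k) + (h + norm (wbar k - u tn)))"
          using pre[OF s x] L by (intro mult_left_mono) auto
        finally show "norm (f (tn + h + s) x - f0) \<le> L * (s + norm (x - wbar k)) + L * (h + norm (wbar k - u tn))"
          by (simp add: algebra_simps)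
      qed
      show "B * h < e / 4"
      proof -
        have "B * h \<le> B * k" using B0 h by (intro mult_left_mono) auto
        moreover have "B * h < B * k \<or> B = 0" using B0 h by auto
        ultimately show ?thesis using kB e by auto
      qed
    qed (use h v20 v2d L B0 in auto)
    have st2': "norm (v2 h - wbar k - h *\<^sub>R f0) \<le> L * (2 + B + c3) * k\<^sup>2"
    proof -
      have "L * (h + B * h) + L * (h + norm (wbar k - u tn)) \<le> L * (k + B * k + k + c3 * k)"
      proof -
        have "h + B * h + (h + norm (wbar k - u tn)) \<le> k + B * k + k + c3 * k"
        proof -
          have "B * h \<le> B * k" using B0 h by (intro mult_left_mono) auto
          then show ?thesis using h d1 by linarith
        qed
        then show ?thesis using L by (simp add: distrib_left[symmetric] mult_left_mono)
      qed
      then have "(L * (h + B * h) + L * (h + norm (wbar k - u tn))) * h \<le> L * (k + B * k + k + c3 * k) * k"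
      proof -
        have Ynn: "0 \<le> L * (k + B * k + k + c3 * k)" using L B0 c30 k by simp
        show ?thesis by (rule mult_mono[OF _ h(2) Ynn]) (use h \<open>L * (h + B * h) + L * (h + norm (wbar k - u tn)) \<le> L * (k + B * k + k + c3 * k)\<close> in auto)
      qed
      also have "\<dots> = L * (2 + B + c3) * k\<^sup>2" by (simp add: power2_eq_square algebra_simps)
      finally show ?thesis using st2 by linarith
    qed
    have ueq: "u (real (Suc n) * k) = u (tn + k)" by (simp add: tn_def algebra_simps)
    have tay': "norm (u (tn + k) - u tn - k *\<^sub>R u' tn) \<le> M2 * k\<^sup>2"
      using tay[OF tn0T tnT(2)] k by (simp add: power2_eq_square mult.assoc)
    have decomp: "Psi h (tn + h) (wbar k) - u (tn + k) =
        (Psi h (tn + h) (wbar k) - v2 h) + (v2 h - wbar k - h *\<^sub>R f0) + (wbar k - y - k *\<^sub>R A (u tn))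
        - (u (tn + k) - u tn - k *\<^sub>R u' tn)"
    proof -
      have kh: "k = h + h" using h by simp
      have eq: "k *\<^sub>R u' tn = k *\<^sub>R A (u tn) + h *\<^sub>R f0 + h *\<^sub>R f0"
        unfolding u'eq[OF tn0T] f0_def kh scaleR_add_right scaleR_add_left by (rule add.assoc[symmetric])
      show ?thesis unfolding eq by (simp add: y_def algebra_simps)
    qed
    have "norm (Psi h (tn + h) (wbar k) - u (tn + k)) \<le>
        norm (Psi h (tn + h) (wbar k) - v2 h) + norm (v2 h - wbar k - h *\<^sub>R f0) + norm (wbar k - y - k *\<^sub>R A (u tn))
        + norm (u (tn + k) - u tn - k *\<^sub>R u' tn)"
      unfolding decomp by (intro norm_triangle_le_diff norm_triangle_le add_mono order_refl norm_triangle_ineq)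
    also have "\<dots> \<le> Cc * k\<^sup>2 + L * (2 + B + c3) * k\<^sup>2 + c2 * k\<^sup>2 + M2 * k\<^sup>2"
      using v2e Cerr st2' wb tay' by linarith
    also have "\<dots> = Cfin * k\<^sup>2" by (simp add: Cfin_def algebra_simps)
    finally have fin: "norm (Psi h (tn + h) (wbar k) - u (tn + k)) \<le> Cfin * k\<^sup>2" .
    show "let tn = real n * k;
             wbar = gen_sol S K (Psi (k / 2) tn (u tn))
                      (bd (u tn + (k / 2) *\<^sub>R f tn (u tn))) (bd (A (u tn)))
         in norm (Psi (k / 2) (tn + k / 2) (wbar k) - u (real (Suc n) * k)) \<le> Cfin * k ^ 2"
      using fin ueq unfolding Let_def by (simp add: tn_def wbar_def h_def)
  qed
qed

end
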